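(* Let $Q$ be a quantale, $M,N,P$ left $Q$-modules and $f:P\to M$, $g:P\to N$ injective $Q$-module homomorphisms. Let $\vartheta$ be the $Q$-module congruence on $M\times N$ generated by $\{((f(w),\bot_N),(\bot_M,g(w)))\mid w\in P\}$. Then for all $(u,v)\in M\times N$, $(u,v)$ is $\vartheta$-saturated if and only if $\{w\in P\mid f(w)\le u\}=\{w\in P\mid g(w)\le v\}$.
   Context: A quantale is a complete lattice with a monoid product distributing over arbitrary joins; a left $Q$-module is a complete lattice with an associative unital action of $Q$ distributing over joins in each argument; homomorphisms preserve arbitrary joins and the action. $M\times N$ is the $Q$-module with componentwise order and action. For $R\subseteq K^2$ ($K$ a $Q$-module), $s\in K$ is $R$-saturated if for all $(x,y)\in R$ and all $a\in Q$: $ax\le s$ iff $ay\le s$. *)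

theory Defs
  imports Main "HOL-Library.Product_Order"
begin

class quantale = complete_lattice + monoid_mult +
  assumes mult_Sup_distl: "a * Sup A = Sup ((\<lambda>b. a * b) ` A)"
      and mult_Sup_distr: "Sup A * a = Sup ((\<lambda>b. b * a) ` A)"

definition qmodule :: "('q::quantale \<Rightarrow> 'm::complete_lattice \<Rightarrow> 'm) \<Rightarrow> bool" where
  "qmodule act \<longleftrightarrow>
     (\<forall>a b x. act a (act b x) = act (a * b) x) \<and>
     (\<forall>x. act 1 x = x) \<and>
     (\<forall>A x. act (Sup A) x = Sup ((\<lambda>a. act a x) ` A)) \<and>
     (\<forall>a X. act a (Sup X) = Sup (act a ` X))"

definition qmodule_hom ::
  "('q::quantale \<Rightarrow> 'a::complete_lattice \<Rightarrow> 'a) \<Rightarrow> ('q \<Rightarrow> 'b::complete_lattice \<Rightarrow> 'b)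
    \<Rightarrow> ('a \<Rightarrow> 'b) \<Rightarrow> bool" where
  "qmodule_hom actA actB h \<longleftrightarrow>
     (\<forall>X. h (Sup X) = Sup (h ` X)) \<and> (\<forall>a x. h (actA a x) = actB a (h x))"

definition prod_act ::
  "('q \<Rightarrow> 'm \<Rightarrow> 'm) \<Rightarrow> ('q \<Rightarrow> 'n \<Rightarrow> 'n) \<Rightarrow> 'q \<Rightarrow> 'm \<times> 'n \<Rightarrow> 'm \<times> 'n" where
  "prod_act actM actN a p = (actM a (fst p), actN a (snd p))"

definition qmodule_congruence ::
  "('q::quantale \<Rightarrow> 'k::complete_lattice \<Rightarrow> 'k) \<Rightarrow> ('k \<times> 'k) set \<Rightarrow> bool" where
  "qmodule_congruence act \<theta> \<longleftrightarrow>
     equiv UNIV \<theta> \<and>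
     (\<forall>a x y. (x, y) \<in> \<theta> \<longrightarrow> (act a x, act a y) \<in> \<theta>) \<and>
     (\<forall>S. S \<subseteq> \<theta> \<longrightarrow> (Sup (fst ` S), Sup (snd ` S)) \<in> \<theta>)"

definition congruence_generated ::
  "('q::quantale \<Rightarrow> 'k::complete_lattice \<Rightarrow> 'k) \<Rightarrow> ('k \<times> 'k) set \<Rightarrow> ('k \<times> 'k) set" where
  "congruence_generated act R = \<Inter>{\<theta>. qmodule_congruence act \<theta> \<and> R \<subseteq> \<theta>}"

definition saturated ::
  "('q \<Rightarrow> 'k::order \<Rightarrow> 'k) \<Rightarrow> ('k \<times> 'k) set \<Rightarrow> 'k \<Rightarrow> bool" where
  "saturated act R s \<longleftrightarrow> (\<forall>(x, y) \<in> R. \<forall>a. act a x \<le> s \<longleftrightarrow> act a y \<le> s)"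

end

theory Submission
  imports Defs
begin

lemma qm_bot: "qmodule act \<Longrightarrow> act a bot = bot"
  unfolding qmodule_def by (metis Sup_empty image_empty)

lemma prod_act_Sup:
  assumes "qmodule actM" "qmodule actN"
  shows "prod_act actM actN a (Sup X) = Sup (prod_act actM actN a ` X)"
proof -
  have 1: "actM a (Sup (fst ` X)) = Sup (actM a ` fst ` X)" using assms(1) unfolding qmodule_def by blast
  have 2: "actN a (Sup (snd ` X)) = Sup (actN a ` snd ` X)" using assms(2) unfolding qmodule_def by blast
  show ?thesis unfolding prod_act_def Sup_prod_def using 1 2
    by (simp add: image_image)
qed

lemma prod_act_mult:
  assumes "qmodule actM" "qmodule actN"
  shows "prod_act actM actN a (prod_act actM actN b x) = prod_act actM actN (a*b) x"
  using assms unfolding prod_act_def qmodule_def by simp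

lemma prod_act_one:
  assumes "qmodule actM" "qmodule actN"
  shows "prod_act actM actN 1 x = x"
  using assms unfolding prod_act_def qmodule_def by simp

theorem proposition4p4:
  fixes actM :: "'q::quantale \<Rightarrow> 'm::complete_lattice \<Rightarrow> 'm"
    and actN :: "'q \<Rightarrow> 'n::complete_lattice \<Rightarrow> 'n"
    and actP :: "'q \<Rightarrow> 'p::complete_lattice \<Rightarrow> 'p"
    and f :: "'p \<Rightarrow> 'm" and g :: "'p \<Rightarrow> 'n"
  assumes "qmodule actM" and "qmodule actN" and "qmodule actP"
    and "qmodule_hom actP actM f" and "qmodule_hom actP actN g"
    and "inj f" and "inj g"
  shows "\<forall>u v. saturated (prod_act actM actN)
                 (congruence_generated (prod_act actM actN)
                    {((f w, bot), (bot, g w)) | w. True}) (u, v)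
             \<longleftrightarrow> {w. f w \<le> u} = {w. g w \<le> v}"
proof (intro allI iffI)
  fix u v
  let ?act = "prod_act actM actN"
  let ?R = "{((f w, bot), (bot, g w)) | w. True} :: (('m \<times> 'n) \<times> ('m \<times> 'n)) set"
  have Rsub: "?R \<subseteq> congruence_generated ?act ?R"
    unfolding congruence_generated_def by blast
  {
    assume sat: "saturated ?act (congruence_generated ?act ?R) (u, v)"
    show "{w. f w \<le> u} = {w. g w \<le> v}"
    proof (intro set_eqI)
      fix w
      have "((f w, bot), (bot, g w)) \<in> congruence_generated ?act ?R" using Rsub by blast
      then have "?act 1 (f w, bot) \<le> (u, v) \<longleftrightarrow> ?act 1 (bot, g w) \<le> (u, v)"
        using sat unfolding saturated_def by blast
      then show "w \<in> {w. f w \<le> u} \<longleftrightarrow> w \<in> {w. g w \<le> v}"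
        using prod_act_one[OF assms(1,2)] by simp
    qed
  next
    assume eq: "{w. f w \<le> u} = {w. g w \<le> v}"
    define T where "T = {(x, y). \<forall>a. ?act a x \<le> (u, v) \<longleftrightarrow> ?act a y \<le> (u, v)}"
    have cong: "qmodule_congruence ?act T"
      unfolding qmodule_congruence_def
    proof (intro conjI allI impI)
      show "equiv UNIV T" unfolding T_def equiv_def refl_on_def sym_def trans_def by auto
    next
      fix a x y assume "(x, y) \<in> T"
      then show "(?act a x, ?act a y) \<in> T"
        unfolding T_def using prod_act_mult[OF assms(1,2)] by auto
    next
      fix S assume S: "S \<subseteq> T"
      show "(Sup (fst ` S), Sup (snd ` S)) \<in> T"
        unfolding T_def
      proof (clarsimp)
        fix a
        have "?act a (Sup (fst ` S)) \<le> (u, v) \<longleftrightarrow> (\<forall>p\<in>S. ?act a (fst p) \<le> (u, v))"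
          by (simp add: prod_act_Sup[OF assms(1,2)] Sup_le_iff)
        also have "\<dots> \<longleftrightarrow> (\<forall>p\<in>S. ?act a (snd p) \<le> (u, v))"
        proof -
          have "\<And>p. p \<in> S \<Longrightarrow> ?act a (fst p) \<le> (u, v) \<longleftrightarrow> ?act a (snd p) \<le> (u, v)"
            using S unfolding T_def by (auto simp: case_prod_beta)
          then show ?thesis by blast
        qed
        also have "\<dots> \<longleftrightarrow> ?act a (Sup (snd ` S)) \<le> (u, v)"
          by (simp add: prod_act_Sup[OF assms(1,2)] Sup_le_iff)
        finally show "?act a (Sup (fst ` S)) \<le> (u, v) \<longleftrightarrow> ?act a (Sup (snd ` S)) \<le> (u, v)" .
      qed
    qed
    have RT: "?R \<subseteq> T"
    proof
      fix p assume "p \<in> ?R"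
      then obtain w where p: "p = ((f w, bot), (bot, g w))" by blast
      have hf: "\<And>a. actM a (f w) = f (actP a w)" using assms(4) unfolding qmodule_hom_def by simp
      have hg: "\<And>a. actN a (g w) = g (actP a w)" using assms(5) unfolding qmodule_hom_def by simp
      show "p \<in> T" unfolding T_def p prod_act_def
        using eq hf hg qm_bot[OF assms(1)] qm_bot[OF assms(2)] by auto
    qed
    have "congruence_generated ?act ?R \<subseteq> T"
      unfolding congruence_generated_def using cong RT by blast
    then show "saturated ?act (congruence_generated ?act ?R) (u, v)"
      unfolding saturated_def T_def by blast
  }
qed

end
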